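(* Let $e(\tau,s)$ be a complete equation of state of Mie–Grüneisen form, $p(\tau,s)=\pi(\tau,e(\tau,s))$ with $\pi(\tau,e)=p_s(\tau)+\frac{\Gamma(\tau)}{\tau}(e-e_s(\tau))$, where $e_s$ is a reference isentrope, $p_s=-e_s'$, and $\pi,\Gamma$ are sufficiently differentiable. Let $K_s(\tau)=-\tau p_s'(\tau)$ and let $\mathsf G(\tau,e)=G(\tau,s(\tau,e))$ be the fundamental derivative. Assume (i) $\Gamma$ is a positive, decreasing and convex function of $\tau$; (ii) $K_s$ is a decreasing positive function; (iii) $e\ge e_s(\tau)$. Then $$\mathsf G(\tau,e)\ge\frac12\left[1+\min\Big(\inf_{\tau>0}\frac{-\tau K_s'(\tau)}{K_s(\tau)},\ \inf_\tau\Gamma(\tau)+1\Big)\right].$$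
   Context: For a complete equation of state $e(\tau,s)$ (specific internal energy as a function of specific volume $\tau$ and specific entropy $s$), the pressure is $p=-\partial_\tau e$ and the fundamental derivative is $G(\tau,s)=-\tfrac12\tau\,\partial^2_\tau p(\tau,s)/\partial_\tau p(\tau,s)$; $s(\tau,e)$ denotes the inverse of $s\mapsto e(\tau,s)$. *)

theory Defs
  imports "HOL-Analysis.Analysis"
begin

definition pres :: "(real \<Rightarrow> real \<Rightarrow> real) \<Rightarrow> real \<Rightarrow> real \<Rightarrow> real" where
  "pres e \<tau> s = - deriv (\<lambda>t. e t s) \<tau>"

definition fund_deriv :: "(real \<Rightarrow> real \<Rightarrow> real) \<Rightarrow> real \<Rightarrow> real \<Rightarrow> real" where
  "fund_deriv e \<tau> s =
     - (1/2) * \<tau> * deriv (deriv (\<lambda>u. pres e u s)) \<tau> / deriv (\<lambda>u. pres e u s) \<tau>"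

end

theory Submission
  imports Defs
begin


lemma mono_deriv_nonneg:
  fixes f :: "real \<Rightarrow> real"
  assumes m: "mono_on {0<..} f" and d: "(f has_real_derivative D) (at t)" and t: "t > 0"
  shows "D \<ge> 0"
proof (rule ccontr)
  assume "\<not> D \<ge> 0"
  then obtain dd where dd: "dd > 0" "\<forall>h>0. h < dd \<longrightarrow> f t < f (t - h)"
    using DERIV_neg_dec_left[OF d] by force
  define h where "h = min dd t / 2"
  have h: "h > 0" "h < dd" "h < t" using dd t by (auto simp: h_def)
  have "f (t - h) \<le> f t" by (rule mono_onD[OF m]) (use h t in auto)
  moreover have "f t < f (t - h)" using dd(2) h by blast
  ultimately show False by simp
qed

lemma antimono_deriv_nonpos:
  fixes f :: "real \<Rightarrow> real"
  assumes m: "antimono_on {0<..} f" and d: "(f has_real_derivative D) (at t)" and t: "t > 0"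
  shows "D \<le> 0"
proof -
  have "mono_on {0<..} (\<lambda>x. - f x)" using m
    by (auto simp: monotone_on_def)
  moreover have "((\<lambda>x. - f x) has_real_derivative - D) (at t)"
    using d by (auto intro!: derivative_eq_intros)
  ultimately have "- D \<ge> 0" using mono_deriv_nonneg t by blast
  thus ?thesis by simp
qed

lemma convex_deriv_mono:
  fixes f :: "real \<Rightarrow> real"
  assumes c: "convex_on {0<..} f" and d: "\<forall>t>0. f differentiable at t"
  shows "mono_on {0<..} (deriv f)"
proof (rule mono_onI)
  fix x y :: real assume xy: "x \<in> {0<..}" "y \<in> {0<..}" "x \<le> y"
  have dx: "(f has_field_derivative deriv f x) (at x within {0<..})"
    using d xy by (simp add: DERIV_deriv_iff_real_differentiable has_field_derivative_at_within)
  have dy: "(f has_field_derivative deriv f y) (at y within {0<..})"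
    using d xy by (simp add: DERIV_deriv_iff_real_differentiable has_field_derivative_at_within)
  have 1: "f y - f x \<ge> deriv f x * (y - x)"
    by (rule convex_on_imp_above_tangent[OF c _ _ _ dx]) (use xy in \<open>auto simp: interior_open\<close>)
  have 2: "f x - f y \<ge> deriv f y * (x - y)"
    by (rule convex_on_imp_above_tangent[OF c _ _ _ dy]) (use xy in \<open>auto simp: interior_open\<close>)
  show "deriv f x \<le> deriv f y"
  proof (cases "x = y")
    case False
    with xy have "y - x > 0" by auto
    moreover have "deriv f x * (y - x) \<le> deriv f y * (y - x)" using 1 2 by argo
    ultimately show ?thesis by (simp add: mult_le_cancel_right)
  qed simp
qed

lemma alg:
  fixes t a b c q k k' m E2 E3 :: real
  assumes t: "t > 0" and a: "a > 0" and b: "b \<le> 0" and c: "c \<ge> 0" and q: "q \<ge> 0"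
    and k: "k > 0" and mk: "m * k \<le> - t * k'" and ma: "m \<le> a + 1"
    and kE: "k = t * E2" and kE': "k' = E2 + t * E3"
    and D1: "D1 = - E2 + ((b/t - a/t^2) - (a/t)^2) * q"
    and D2: "D2 = - E3 + ((c/t - b/t^2 - (b/t^2 - 2*a/t^3)) - 2*(a/t)*(b/t - a/t^2)) * q
               + ((b/t - a/t^2) - (a/t)^2) * (-(a/t) * q)"
  shows "1/2 * (1 + m) \<le> - (1/2) * t * D2 / D1"
proof -
  have E2: "E2 = k / t" using kE t by simp
  have E3: "E3 = (k' - k/t) / t" using kE' E2 t by (simp add: field_simps)
  have W: "t^2 * (- D1) = k * t + (a^2 + a - b*t) * q"
    unfolding D1 E2 using t by (simp add: field_simps power2_eq_square)
  have V: "t^3 * D2 = k*t - k'*t^2 + (t^2*c - 2*t*b + 2*a - 3*t*a*b + 3*a^2 + a^3) * q"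
    unfolding D2 E3 using t by (simp add: field_simps power2_eq_square power3_eq_cube)
  have Wpos: "k * t + (a^2 + a - b*t) * q > 0"
  proof -
    have "b*t \<le> 0" using b t by (simp add: mult_nonpos_nonneg)
    moreover have "a^2 \<ge> 0" by simp
    ultimately have "a^2 + a - b*t \<ge> 0" using a by linarith
    thus ?thesis using t k q by (intro add_pos_nonneg) auto
  qed
  have D1neg: "D1 < 0"
  proof -
    have "t^2 * (- D1) > 0" using W Wpos by simp
    thus ?thesis using t by (simp add: mult_less_0_iff)
  qed
  have part1: "- k'*t^2 \<ge> m * (k * t)" using mk t
    by (metis mult.assoc mult.commute mult_minus_left mult_right_mono less_imp_le power2_eq_square)
  have part2: "(t^2*c - 2*t*b + 2*a - 3*t*a*b + 3*a^2 + a^3) \<ge> (1 + m) * (a^2 + a - b*t)"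
  proof -
    have "t^2*c \<ge> 0" using c by simp
    moreover have "(2 + 3*a - (1+m)) * (- t*b) \<ge> 0"
    proof -
      have "2 + 3*a - (1+m) \<ge> 0" using ma a by linarith
      moreover have "- t*b \<ge> 0" using t b by (simp add: mult_nonneg_nonpos)
      ultimately show ?thesis by (rule mult_nonneg_nonneg)
    qed
    moreover have "a*(a+1)*(a+1-m) \<ge> 0" using a ma by simp
    ultimately show ?thesis by (simp add: algebra_simps power2_eq_square power3_eq_cube)
  qed
  have key: "t^3 * D2 \<ge> (1+m) * (t^2 * (- D1))"
  proof -
    have "(1+m)*(t^2 * (- D1)) = k*t + m*(k*t) + (1+m)*(a^2 + a - b*t)*q" unfolding W by (simp add: algebra_simps)
    also have "\<dots> \<le> k*t - k'*t^2 + (t^2*c - 2*t*b + 2*a - 3*t*a*b + 3*a^2 + a^3) * q"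
      using part1 mult_right_mono[OF part2 q] by linarith
    finally show ?thesis using V by simp
  qed
  have "t * D2 \<ge> (1+m) * (- D1)"
  proof -
    have "t^2 * (t * D2) \<ge> t^2 * ((1+m) * (- D1))" using key by (simp add: algebra_simps power3_eq_cube power2_eq_square)
    moreover have "t^2 > 0" using t by simp
    ultimately show ?thesis using mult_le_cancel_left_pos by blast
  qed
  hence "(1+m) \<le> t * D2 / (- D1)" using D1neg pos_le_divide_eq[of "- D1" "1+m" "t*D2"] by linarith
  thus ?thesis using D1neg by (simp add: field_simps)
qed


theorem propositionA2:
  fixes e :: "real \<Rightarrow> real \<Rightarrow> real" and e\<^sub>s \<Gamma> :: "real \<Rightarrow> real" and \<tau> s :: real
  defines "p\<^sub>s \<equiv> (\<lambda>t. - deriv e\<^sub>s t)"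
      and "K\<^sub>s \<equiv> (\<lambda>t. - t * deriv (\<lambda>u. - deriv e\<^sub>s u) t)"
  assumes e_smooth: "\<forall>s'. \<forall>t>0. (\<lambda>u. e u s') differentiable at t
              \<and> deriv (\<lambda>u. e u s') differentiable at t
              \<and> deriv (deriv (\<lambda>u. e u s')) differentiable at t"
      and es_smooth: "\<forall>t>0. e\<^sub>s differentiable at t \<and> deriv e\<^sub>s differentiable at t
              \<and> deriv (deriv e\<^sub>s) differentiable at t"
      and \<Gamma>_smooth: "\<forall>t>0. \<Gamma> differentiable at t \<and> deriv \<Gamma> differentiable at t"
      and MG: "\<forall>s'. \<forall>t>0. pres e t s' = p\<^sub>s t + \<Gamma> t / t * (e t s' - e\<^sub>s t)"
      and \<Gamma>_pos: "\<forall>t>0. \<Gamma> t > 0"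
      and \<Gamma>_decr: "antimono_on {0<..} \<Gamma>"
      and \<Gamma>_convex: "convex_on {0<..} \<Gamma>"
      and K_pos: "\<forall>t>0. K\<^sub>s t > 0"
      and K_decr: "antimono_on {0<..} K\<^sub>s"
      and \<tau>_pos: "\<tau> > 0"
      and above: "e \<tau> s \<ge> e\<^sub>s \<tau>"
  shows "fund_deriv e \<tau> s \<ge> 1/2 * (1 + min (INF t\<in>{0<..}. - t * deriv K\<^sub>s t / K\<^sub>s t)
                                          ((INF t\<in>{0<..}. \<Gamma> t) + 1))"
  proof -
  define f where "f = (\<lambda>u. e u s)"
  define E1 where "E1 = deriv e\<^sub>s"
  define E2 where "E2 = deriv E1"
  define E3 where "E3 = deriv E2"
  define G1 where "G1 = deriv \<Gamma>"
  define G2 where "G2 = deriv G1"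
  define P where "P = (\<lambda>u. pres e u s)"
  define g where "g = (\<lambda>u. e u s - e\<^sub>s u)"
  have dE1: "(e\<^sub>s has_real_derivative E1 t) (at t)" if "t > 0" for t
    using es_smooth that unfolding E1_def by (simp add: DERIV_deriv_iff_real_differentiable)
  have dE2: "(E1 has_real_derivative E2 t) (at t)" if "t > 0" for t
    using es_smooth that unfolding E1_def E2_def by (simp add: DERIV_deriv_iff_real_differentiable)
  have dE3: "(E2 has_real_derivative E3 t) (at t)" if "t > 0" for t
    using es_smooth that unfolding E1_def E2_def E3_def by (simp add: DERIV_deriv_iff_real_differentiable)
  have dG: "(\<Gamma> has_real_derivative G1 t) (at t)" if "t > 0" for t
    using \<Gamma>_smooth that unfolding G1_def by (simp add: DERIV_deriv_iff_real_differentiable)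
  have dG1: "(G1 has_real_derivative G2 t) (at t)" if "t > 0" for t
    using \<Gamma>_smooth that unfolding G1_def G2_def by (simp add: DERIV_deriv_iff_real_differentiable)
  have df: "(f has_real_derivative deriv f t) (at t)" if "t > 0" for t
    using e_smooth that unfolding f_def by (simp add: DERIV_deriv_iff_real_differentiable)
  have Peq: "P t = - E1 t + \<Gamma> t / t * g t" if "t > 0" for t
    using MG that unfolding P_def p\<^sub>s_def E1_def g_def by simp
  have fE: "deriv f t = E1 t - \<Gamma> t / t * g t" if "t > 0" for t
    using Peq[OF that] unfolding P_def pres_def f_def by simp
  have dg: "(g has_real_derivative (- (\<Gamma> t / t) * g t)) (at t)" if "t > 0" for t
  proof -
    have "(g has_real_derivative (deriv f t - E1 t)) (at t)"
      unfolding g_def using DERIV_diff[OF df[OF that] dE1[OF that]] unfolding f_def by simp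
    thus ?thesis using fE[OF that] by simp
  qed
  define D1 where "D1 = (\<lambda>t. - E2 t + ((G1 t/t - \<Gamma> t/t^2) - (\<Gamma> t/t)^2) * g t)"
  have dP: "(P has_real_derivative D1 t) (at t)" if t: "t > 0" for t
  proof -
    have "((\<lambda>u. - E1 u + \<Gamma> u / u * g u) has_real_derivative D1 t) (at t)"
      unfolding D1_def
      apply (rule DERIV_cong[OF DERIV_add[OF DERIV_minus[OF dE2[OF t]] DERIV_mult[OF DERIV_divide[OF dG[OF t] DERIV_ident] dg[OF t]]]])
      using t by (simp_all add: field_simps power2_eq_square)
    then show ?thesis
      by (rule has_field_derivative_transform_within_open[where S="{0<..}"]) (use t Peq in auto)
  qed
  have dPeq: "deriv P t = D1 t" if "t > 0" for t using dP[OF that] by (rule DERIV_imp_deriv)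
  define D2 where "D2 = - E3 \<tau> + ((G2 \<tau>/\<tau> - G1 \<tau>/\<tau>^2 - (G1 \<tau>/\<tau>^2 - 2*\<Gamma> \<tau>/\<tau>^3)) - 2*(\<Gamma> \<tau>/\<tau>)*(G1 \<tau>/\<tau> - \<Gamma> \<tau>/\<tau>^2)) * g \<tau>
               + ((G1 \<tau>/\<tau> - \<Gamma> \<tau>/\<tau>^2) - (\<Gamma> \<tau>/\<tau>)^2) * (-(\<Gamma> \<tau>/\<tau>) * g \<tau>)"
  have dD1: "(D1 has_real_derivative D2) (at \<tau>)"
    unfolding D1_def D2_def
    apply (rule DERIV_cong[OF DERIV_add[OF DERIV_minus[OF dE3[OF \<tau>_pos]] DERIV_mult[OF DERIV_diff[OF DERIV_diff[OF DERIV_divide[OF dG1[OF \<tau>_pos] DERIV_ident] DERIV_divide[OF dG[OF \<tau>_pos] DERIV_power[OF DERIV_ident]]] DERIV_power[OF DERIV_divide[OF dG[OF \<tau>_pos] DERIV_ident]]] dg[OF \<tau>_pos]]]])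
    using \<tau>_pos by (simp_all add: field_simps power2_eq_square power3_eq_cube)
  have ddP: "deriv (deriv P) \<tau> = D2"
  proof -
    have "(deriv P has_real_derivative D2) (at \<tau>)"
      by (rule has_field_derivative_transform_within_open[OF dD1, where S="{0<..}"]) (use \<tau>_pos dPeq in auto)
    thus ?thesis by (rule DERIV_imp_deriv)
  qed
  have Keq: "K\<^sub>s t = t * E2 t" if "t > 0" for t
  proof -
    have "((\<lambda>u. - deriv e\<^sub>s u) has_real_derivative - E2 t) (at t)"
      using dE2[OF that] unfolding E1_def by (auto intro!: derivative_eq_intros)
    then show ?thesis unfolding K\<^sub>s_def by (simp add: DERIV_imp_deriv)
  qed
  have dK: "(K\<^sub>s has_real_derivative (E2 t + t * E3 t)) (at t)" if t: "t > 0" for t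
  proof -
    have "((\<lambda>u. u * E2 u) has_real_derivative (E2 t + t * E3 t)) (at t)"
      using dE3[OF t] by (auto intro!: derivative_eq_intros)
    then show ?thesis
      by (rule has_field_derivative_transform_within_open[where S="{0<..}"]) (use t Keq in auto)
  qed
  have K'neg: "deriv K\<^sub>s t \<le> 0" if "t > 0" for t
    using antimono_deriv_nonpos[OF K_decr dK[OF that] that] DERIV_imp_deriv[OF dK[OF that]] by simp
  have bddA: "bdd_below ((\<lambda>t. - t * deriv K\<^sub>s t / K\<^sub>s t) ` {0<..})"
  proof (rule bdd_belowI2[where m=0])
    fix t :: real assume "t \<in> {0<..}"
    hence t: "t > 0" by simp
    have "- t * deriv K\<^sub>s t \<ge> 0" using K'neg[OF t] t by (simp add: mult_nonneg_nonpos)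
    moreover have "K\<^sub>s t > 0" using K_pos t by simp
    ultimately show "0 \<le> - t * deriv K\<^sub>s t / K\<^sub>s t" by (rule divide_nonneg_pos)
  qed
  have A_le: "(INF t\<in>{0<..}. - t * deriv K\<^sub>s t / K\<^sub>s t) \<le> - \<tau> * deriv K\<^sub>s \<tau> / K\<^sub>s \<tau>"
    by (rule cINF_lower[OF bddA]) (use \<tau>_pos in simp)
  have bddG: "bdd_below (\<Gamma> ` {0<..})"
    by (rule bdd_belowI2[where m=0]) (use \<Gamma>_pos in force)
  have I_le: "(INF t\<in>{0<..}. \<Gamma> t) \<le> \<Gamma> \<tau>"
    by (rule cINF_lower[OF bddG]) (use \<tau>_pos in simp)
  define m where "m = min (INF t\<in>{0<..}. - t * deriv K\<^sub>s t / K\<^sub>s t) ((INF t\<in>{0<..}. \<Gamma> t) + 1)"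
  have m1: "m \<le> - \<tau> * deriv K\<^sub>s \<tau> / K\<^sub>s \<tau>" using A_le unfolding m_def by linarith
  have m2: "m \<le> \<Gamma> \<tau> + 1" using I_le unfolding m_def by linarith
  have Kt: "K\<^sub>s \<tau> > 0" using K_pos \<tau>_pos by simp
  have mk: "m * K\<^sub>s \<tau> \<le> - \<tau> * deriv K\<^sub>s \<tau>"
    using mult_right_mono[OF m1 less_imp_le[OF Kt]] Kt by simp
  have Gb: "G1 \<tau> \<le> 0" using antimono_deriv_nonpos[OF \<Gamma>_decr dG[OF \<tau>_pos] \<tau>_pos] .
  have G1mono: "mono_on {0<..} G1" unfolding G1_def
    by (rule convex_deriv_mono[OF \<Gamma>_convex]) (use \<Gamma>_smooth in simp)
  have Gc: "G2 \<tau> \<ge> 0" using mono_deriv_nonneg[OF G1mono dG1[OF \<tau>_pos] \<tau>_pos] .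
  have q: "g \<tau> \<ge> 0" using above unfolding g_def by simp
  have "1/2 * (1 + m) \<le> - (1/2) * \<tau> * D2 / D1 \<tau>"
    by (rule alg[OF \<tau>_pos _ Gb Gc q Kt mk m2 Keq[OF \<tau>_pos] DERIV_imp_deriv[OF dK[OF \<tau>_pos]]])
       (simp_all add: \<Gamma>_pos \<tau>_pos D2_def D1_def)
  moreover have "fund_deriv e \<tau> s = - (1/2) * \<tau> * D2 / D1 \<tau>"
    unfolding fund_deriv_def using ddP dPeq[OF \<tau>_pos] unfolding P_def by simp
  ultimately show ?thesis unfolding m_def by simp
qed

end
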